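(* Let $H$ and $G$ be as in the construction described in the context. If $H$ is linearly orderable, then so is $G$.
   Context: A group is linearly orderable if it admits a linear order $\le$ such that $g_1\le g_2$ implies $g_1x\le g_2x$ and $xg_1\le xg_2$ for all $x$. Construction: $H$ is a group generated by a countable set $\{a^{(1)},a^{(2)},\ldots\}$. For groups $A,B$, the wreath product $A\,\mathrm{Wr}\,B$ is the semidirect product $A^B\rtimes B$, where $A^B$ is the group of all functions $B\to A$ with pointwise multiplication and $B$ acts by $(bf)(x)=f(xb)$. Let $Z=\langle z\rangle$ be infinite cyclic and let $b^{(i)}\in H^Z$ be given by $b^{(i)}(z^k)=a^{(i)}$ if $k>0$ and $b^{(i)}(z^k)=1$ otherwise. Let $K=\langle z,b^{(i)}\ (i\in\mathbb{N})\rangle\le H\,\mathrm{Wr}\,Z$. Let $\langle s\rangle$ be infinite cyclic and let $c\in K^{\langle s\rangle}$ be given by $c(s)=z$, $c(s^{2^i})=b^{(i)}$ for $i>0$, and $c(s^k)=1$ otherwise. Let $G=\langle c,s\rangle\le K\,\mathrm{Wr}\,\langle s\rangle$. *)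

theory Defs
  imports "HOL-Algebra.Algebra"
begin

definition linearly_orderable :: "('a, 'm) monoid_scheme \<Rightarrow> bool" where
  "linearly_orderable G \<longleftrightarrow> group G \<and>
     (\<exists>le :: 'a \<Rightarrow> 'a \<Rightarrow> bool.
        (\<forall>x\<in>carrier G. le x x) \<and>
        (\<forall>x\<in>carrier G. \<forall>y\<in>carrier G. le x y \<and> le y x \<longrightarrow> x = y) \<and>
        (\<forall>x\<in>carrier G. \<forall>y\<in>carrier G. \<forall>w\<in>carrier G. le x y \<and> le y w \<longrightarrow> le x w) \<and>
        (\<forall>x\<in>carrier G. \<forall>y\<in>carrier G. le x y \<or> le y x) \<and>
        (\<forall>g1\<in>carrier G. \<forall>g2\<in>carrier G. \<forall>x\<in>carrier G.
            le g1 g2 \<longrightarrow> le (g1 \<otimes>\<^bsub>G\<^esub> x) (g2 \<otimes>\<^bsub>G\<^esub> x) \<and> le (x \<otimes>\<^bsub>G\<^esub> g1) (x \<otimes>\<^bsub>G\<^esub> g2)))"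

text \<open>Unrestricted wreath product A Wr Z with Z = <z> infinite cyclic, z^k represented by k :: int.
  Elements (f, k) stand for f z^k with f : Z -> A arbitrary (A^Z, all functions),
  and Z acts by (z^m f)(z^x) = f(z^(x+m)); product (f,m)(g,n) = (f * (z^m g), m+n).\<close>
definition wreath_Z :: "('a, 'm) monoid_scheme \<Rightarrow> ((int \<Rightarrow> 'a) \<times> int) monoid" where
  "wreath_Z A = \<lparr> carrier = {(f, k). \<forall>x. f x \<in> carrier A},
      monoid.mult = (\<lambda>(f, m) (g, n). (\<lambda>x. f x \<otimes>\<^bsub>A\<^esub> g (x + m), m + n)),
      one = (\<lambda>_. \<one>\<^bsub>A\<^esub>, 0) \<rparr>"

definition gen_subgroup :: "('a, 'm) monoid_scheme \<Rightarrow> 'a set \<Rightarrow> ('a, 'm) monoid_scheme" where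
  "gen_subgroup W S = W\<lparr>carrier := generate W S\<rparr>"

definition b_elt :: "('a, 'm) monoid_scheme \<Rightarrow> (nat \<Rightarrow> 'a) \<Rightarrow> nat \<Rightarrow> (int \<Rightarrow> 'a) \<times> int" where
  "b_elt H a i = ((\<lambda>k. if k > 0 then a i else \<one>\<^bsub>H\<^esub>), 0)"

definition z_elt :: "('a, 'm) monoid_scheme \<Rightarrow> (int \<Rightarrow> 'a) \<times> int" where
  "z_elt H = ((\<lambda>_. \<one>\<^bsub>H\<^esub>), 1)"

definition K_grp :: "('a, 'm) monoid_scheme \<Rightarrow> (nat \<Rightarrow> 'a) \<Rightarrow> ((int \<Rightarrow> 'a) \<times> int) monoid" where
  "K_grp H a = gen_subgroup (wreath_Z H) (insert (z_elt H) (b_elt H a ` {i. i \<ge> 1}))"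

definition c_elt :: "('a, 'm) monoid_scheme \<Rightarrow> (nat \<Rightarrow> 'a)
    \<Rightarrow> (int \<Rightarrow> (int \<Rightarrow> 'a) \<times> int) \<times> int" where
  "c_elt H a = ((\<lambda>k. if k = 1 then z_elt H
                     else if (\<exists>i::nat. i \<ge> 1 \<and> k = 2 ^ i) then b_elt H a (SOME i. i \<ge> 1 \<and> k = 2 ^ i)
                     else \<one>\<^bsub>K_grp H a\<^esub>), 0)"

definition s_elt :: "('a, 'm) monoid_scheme \<Rightarrow> (nat \<Rightarrow> 'a)
    \<Rightarrow> (int \<Rightarrow> (int \<Rightarrow> 'a) \<times> int) \<times> int" where
  "s_elt H a = ((\<lambda>_. \<one>\<^bsub>K_grp H a\<^esub>), 1)"

definition G_grp :: "('a, 'm) monoid_scheme \<Rightarrow> (nat \<Rightarrow> 'a)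
    \<Rightarrow> ((int \<Rightarrow> (int \<Rightarrow> 'a) \<times> int) \<times> int) monoid" where
  "G_grp H a = gen_subgroup (wreath_Z (K_grp H a)) {c_elt H a, s_elt H a}"

end

theory Submission
  imports Defs
begin

definition BB :: "('a, 'm) monoid_scheme \<Rightarrow> ((int \<Rightarrow> 'a) \<times> int) set" where
  "BB A = {(f, k). (\<forall>x. f x \<in> carrier A) \<and> (\<exists>N. \<forall>x<N. f x = \<one>\<^bsub>A\<^esub>)}"

lemma wreath_carrier[simp]: "((f,k) \<in> carrier (wreath_Z A)) = (\<forall>x. f x \<in> carrier A)"
  by (simp add: wreath_Z_def)

lemma wreath_mult[simp]: "(f,m) \<otimes>\<^bsub>wreath_Z A\<^esub> (g,n) = (\<lambda>x. f x \<otimes>\<^bsub>A\<^esub> g (x + m), m + n)"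
  by (simp add: wreath_Z_def)

lemma wreath_one[simp]: "\<one>\<^bsub>wreath_Z A\<^esub> = (\<lambda>_. \<one>\<^bsub>A\<^esub>, 0)"
  by (simp add: wreath_Z_def)

lemma wreath_group:
  assumes "group A" shows "group (wreath_Z A)"
proof -
  interpret A: group A by fact
  show ?thesis
  proof (rule groupI)
    fix x y assume "x \<in> carrier (wreath_Z A)" "y \<in> carrier (wreath_Z A)"
    then show "x \<otimes>\<^bsub>wreath_Z A\<^esub> y \<in> carrier (wreath_Z A)"
      by (cases x, cases y) auto
  next
    show "\<one>\<^bsub>wreath_Z A\<^esub> \<in> carrier (wreath_Z A)" by simp
  next
    fix x y z assume "x \<in> carrier (wreath_Z A)" "y \<in> carrier (wreath_Z A)" "z \<in> carrier (wreath_Z A)"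
    then show "x \<otimes>\<^bsub>wreath_Z A\<^esub> y \<otimes>\<^bsub>wreath_Z A\<^esub> z = x \<otimes>\<^bsub>wreath_Z A\<^esub> (y \<otimes>\<^bsub>wreath_Z A\<^esub> z)"
      by (cases x, cases y, cases z) (auto simp: A.m_assoc add.assoc)
  next
    fix x assume "x \<in> carrier (wreath_Z A)"
    then show "\<one>\<^bsub>wreath_Z A\<^esub> \<otimes>\<^bsub>wreath_Z A\<^esub> x = x"
      by (cases x) auto
  next
    fix x assume "x \<in> carrier (wreath_Z A)"
    then obtain f m where x: "x = (f,m)" and f: "\<forall>t. f t \<in> carrier A" by (cases x) auto
    show "\<exists>y\<in>carrier (wreath_Z A). y \<otimes>\<^bsub>wreath_Z A\<^esub> x = \<one>\<^bsub>wreath_Z A\<^esub>"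
      by (rule bexI[of _ "(\<lambda>t. inv\<^bsub>A\<^esub> f (t - m), - m)"]) (use f in \<open>auto simp: x\<close>)
  qed
qed

lemma wreath_inv:
  assumes "group A" "\<forall>t. f t \<in> carrier A"
  shows "inv\<^bsub>wreath_Z A\<^esub> (f,m) = (\<lambda>t. inv\<^bsub>A\<^esub> f (t - m), - m)"
proof -
  interpret A: group A by fact
  interpret W: group "wreath_Z A" using wreath_group[OF assms(1)] .
  show ?thesis by (rule W.inv_equality) (use assms(2) in auto)
qed

lemma BB_subgroup:
  assumes "group A" shows "subgroup (BB A) (wreath_Z A)"
proof -
  interpret A: group A by fact
  interpret W: group "wreath_Z A" using wreath_group[OF assms(1)] .
  show ?thesis
  proof (rule W.subgroupI)
    show "BB A \<subseteq> carrier (wreath_Z A)" by (auto simp: BB_def)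
    show "BB A \<noteq> {}" by (auto simp: BB_def intro!: exI[of _ "(\<lambda>_. \<one>\<^bsub>A\<^esub>, 0)"])
  next
    fix x assume "x \<in> BB A"
    then obtain f m N where x: "x = (f,m)" and f: "\<forall>t. f t \<in> carrier A" and N: "\<forall>t<N. f t = \<one>\<^bsub>A\<^esub>"
      by (auto simp: BB_def)
    have "\<forall>t<N + m. inv\<^bsub>A\<^esub> f (t - m) = \<one>\<^bsub>A\<^esub>" using N by auto
    then show "inv\<^bsub>wreath_Z A\<^esub> x \<in> BB A"
      using f by (auto simp: x wreath_inv[OF assms f] BB_def)
  next
    fix x y assume "x \<in> BB A" "y \<in> BB A"
    then obtain f m N g n M where x: "x = (f,m)" and f: "\<forall>t. f t \<in> carrier A" and N: "\<forall>t<N. f t = \<one>\<^bsub>A\<^esub>"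
      and y: "y = (g,n)" and g: "\<forall>t. g t \<in> carrier A" and M: "\<forall>t<M. g t = \<one>\<^bsub>A\<^esub>"
      by (auto simp: BB_def)
    have "\<forall>t<min N (M - m). f t \<otimes>\<^bsub>A\<^esub> g (t + m) = \<one>\<^bsub>A\<^esub>" using N M g by auto
    then have "\<exists>K. \<forall>t<K. f t \<otimes>\<^bsub>A\<^esub> g (t + m) = \<one>\<^bsub>A\<^esub>" by blast
    then show "x \<otimes>\<^bsub>wreath_Z A\<^esub> y \<in> BB A"
      using f g by (auto simp: x y BB_def)
  qed
qed


definition lexf :: "('a \<Rightarrow> 'a \<Rightarrow> bool) \<Rightarrow> (int \<Rightarrow> 'a) \<Rightarrow> (int \<Rightarrow> 'a) \<Rightarrow> bool" where
  "lexf R f g \<longleftrightarrow> f = g \<or> (\<exists>x. f x \<noteq> g x \<and> (\<forall>y<x. f y = g y) \<and> R (f x) (g x))"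

definition lexle :: "('a \<Rightarrow> 'a \<Rightarrow> bool) \<Rightarrow> (int \<Rightarrow> 'a) \<times> int \<Rightarrow> (int \<Rightarrow> 'a) \<times> int \<Rightarrow> bool" where
  "lexle R p q \<longleftrightarrow> snd p < snd q \<or> (snd p = snd q \<and> lexf R (fst p) (fst q))"

lemma first_diff:
  fixes f g :: "int \<Rightarrow> 'a"
  assumes "\<forall>x<N. f x = g x" "f \<noteq> g"
  shows "\<exists>x. f x \<noteq> g x \<and> (\<forall>y<x. f y = g y)"
proof -
  obtain x0 where x0: "f x0 \<noteq> g x0" using assms(2) by blast
  have "N \<le> x0"
  proof (rule ccontr)
    assume "\<not> N \<le> x0"
    then have "x0 < N" by simp
    then show False using assms(1) x0 by blast
  qed
  define P where "P = (\<lambda>n::nat. f (N + int n) \<noteq> g (N + int n))"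
  have e: "N + int (nat (x0 - N)) = x0" using \<open>N \<le> x0\<close> by simp
  have "P (nat (x0 - N))" unfolding P_def e by (rule x0)
  then have LP: "P (LEAST n. P n)" by (rule LeastI)
  define L where "L = (LEAST n. P n)"
  define x where "x = N + int L"
  have "f x \<noteq> g x" using LP unfolding P_def x_def L_def .
  moreover have "\<forall>y<x. f y = g y"
  proof (intro allI impI)
    fix y assume "y < x"
    show "f y = g y"
    proof (cases "y < N")
      case True then show ?thesis using assms(1) by blast
    next
      case False
      have e2: "int (nat (y - N)) = y - N" using False by simp
      have "nat (y - N) < L" using \<open>y < x\<close> e2 unfolding x_def by linarith
      then have "\<not> P (nat (y - N))" unfolding L_def by (rule not_less_Least)
      moreover have "N + int (nat (y - N)) = y" using e2 by simp
      ultimately show ?thesis unfolding P_def by simp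
    qed
  qed
  ultimately show ?thesis by blast
qed

lemma first_diff_unique:
  fixes f g :: "int \<Rightarrow> 'a"
  assumes "f x \<noteq> g x" "\<forall>y<x. f y = g y" "f x' \<noteq> g x'" "\<forall>y<x'. f y = g y"
  shows "x = x'"
proof (rule ccontr)
  assume "x \<noteq> x'"
  then have "x < x' \<or> x' < x" by linarith
  then show False
  proof
    assume "x < x'" then have "f x = g x" using assms(4) by blast
    then show False using assms(1) by blast
  next
    assume "x' < x" then have "f x' = g x'" using assms(2) by blast
    then show False using assms(3) by blast
  qed
qed

context
  fixes A :: "('a, 'm) monoid_scheme" and R :: "'a \<Rightarrow> 'a \<Rightarrow> bool"
  assumes grp: "group A"
    and refl: "\<forall>x\<in>carrier A. R x x"
    and antisym: "\<forall>x\<in>carrier A. \<forall>y\<in>carrier A. R x y \<and> R y x \<longrightarrow> x = y"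
    and trans: "\<forall>x\<in>carrier A. \<forall>y\<in>carrier A. \<forall>w\<in>carrier A. R x y \<and> R y w \<longrightarrow> R x w"
    and total: "\<forall>x\<in>carrier A. \<forall>y\<in>carrier A. R x y \<or> R y x"
    and inv: "\<forall>g1\<in>carrier A. \<forall>g2\<in>carrier A. \<forall>x\<in>carrier A.
            R g1 g2 \<longrightarrow> R (g1 \<otimes>\<^bsub>A\<^esub> x) (g2 \<otimes>\<^bsub>A\<^esub> x) \<and> R (x \<otimes>\<^bsub>A\<^esub> g1) (x \<otimes>\<^bsub>A\<^esub> g2)"
begin

lemma lexf_antisym:
  assumes "\<forall>t. f t \<in> carrier A" "\<forall>t. g t \<in> carrier A" "lexf R f g" "lexf R g f"
  shows "f = g"
proof (rule ccontr)
  assume ne: "f \<noteq> g"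
  then obtain x where x: "f x \<noteq> g x" "\<forall>y<x. f y = g y" "R (f x) (g x)"
    using assms(3) by (auto simp: lexf_def)
  obtain x' where x': "g x' \<noteq> f x'" "\<forall>y<x'. g y = f y" "R (g x') (f x')"
    using assms(4) ne by (auto simp: lexf_def)
  have "x = x'" using first_diff_unique[of f x g x'] x x' by metis
  then show False using x x' antisym assms(1,2) by metis
qed

lemma lexf_trans:
  assumes "\<forall>t. f t \<in> carrier A" "\<forall>t. g t \<in> carrier A" "\<forall>t. h t \<in> carrier A"
    "lexf R f g" "lexf R g h"
  shows "lexf R f h"
proof (cases "f = g \<or> g = h")
  case True then show ?thesis using assms by auto
next
  case False
  then obtain x where x: "f x \<noteq> g x" "\<forall>y<x. f y = g y" "R (f x) (g x)"
    using assms(4) by (auto simp: lexf_def)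
  obtain x' where x': "g x' \<noteq> h x'" "\<forall>y<x'. g y = h y" "R (g x') (h x')"
    using assms(5) False by (auto simp: lexf_def)
  consider "x < x'" | "x' < x" | "x = x'" by linarith
  then show ?thesis
  proof cases
    case 1
    then have "f x \<noteq> h x" "\<forall>y<x. f y = h y" "R (f x) (h x)" using x x' by auto
    then show ?thesis by (auto simp: lexf_def)
  next
    case 2
    then have "f x' \<noteq> h x'" "\<forall>y<x'. f y = h y" "R (f x') (h x')" using x x' by auto
    then show ?thesis by (auto simp: lexf_def)
  next
    case 3
    have le1: "R (f x) (h x)" using x x' 3 trans assms(1-3) by metis
    have "f x \<noteq> h x"
    proof
      assume "f x = h x"
      then have "R (g x) (f x)" using x' 3 by simp
      then show False using x antisym assms(1,2) by metis
    qed
    moreover have "\<forall>y<x. f y = h y" using x x' 3 by auto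
    ultimately show ?thesis using le1 by (auto simp: lexf_def)
  qed
qed

lemma lexf_total:
  assumes "\<forall>t. f t \<in> carrier A" "\<forall>t. g t \<in> carrier A" "\<forall>x<N. f x = g x"
  shows "lexf R f g \<or> lexf R g f"
proof (cases "f = g")
  case True then show ?thesis by (simp add: lexf_def)
next
  case False
  then obtain x where x: "f x \<noteq> g x" "\<forall>y<x. f y = g y" using first_diff[OF assms(3)] by blast
  have x2: "g x \<noteq> f x" "\<forall>y<x. g y = f y" using x by auto
  have "R (f x) (g x) \<or> R (g x) (f x)" using total assms(1,2) by blast
  then show ?thesis
  proof
    assume "R (f x) (g x)" then show ?thesis using x unfolding lexf_def by blast
  next
    assume "R (g x) (f x)" then show ?thesis using x2 unfolding lexf_def by blast
  qed
qed

lemma lexf_left: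
  assumes "\<forall>t. f t \<in> carrier A" "\<forall>t. g t \<in> carrier A" "\<forall>t. h t \<in> carrier A" "lexf R f g"
  shows "lexf R (\<lambda>x. h x \<otimes>\<^bsub>A\<^esub> f (x + k)) (\<lambda>x. h x \<otimes>\<^bsub>A\<^esub> g (x + k))"
proof (cases "f = g")
  case True then show ?thesis by (simp add: lexf_def)
next
  case False
  interpret A: group A by (rule grp)
  obtain x where x: "f x \<noteq> g x" "\<forall>y<x. f y = g y" "R (f x) (g x)"
    using assms(4) False by (auto simp: lexf_def)
  have "h (x - k) \<otimes>\<^bsub>A\<^esub> f (x - k + k) \<noteq> h (x - k) \<otimes>\<^bsub>A\<^esub> g (x - k + k)"
    using x assms by simp
  moreover have "\<forall>y<x - k. h y \<otimes>\<^bsub>A\<^esub> f (y + k) = h y \<otimes>\<^bsub>A\<^esub> g (y + k)"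
    using x by simp
  moreover have "R (h (x - k) \<otimes>\<^bsub>A\<^esub> f (x - k + k)) (h (x - k) \<otimes>\<^bsub>A\<^esub> g (x - k + k))"
    using x inv assms by simp
  ultimately show ?thesis unfolding lexf_def by blast
qed

lemma lexf_right:
  assumes "\<forall>t. f t \<in> carrier A" "\<forall>t. g t \<in> carrier A" "\<forall>t. h t \<in> carrier A" "lexf R f g"
  shows "lexf R (\<lambda>x. f x \<otimes>\<^bsub>A\<^esub> h x) (\<lambda>x. g x \<otimes>\<^bsub>A\<^esub> h x)"
proof (cases "f = g")
  case True then show ?thesis by (simp add: lexf_def)
next
  case False
  interpret A: group A by (rule grp)
  obtain x where x: "f x \<noteq> g x" "\<forall>y<x. f y = g y" "R (f x) (g x)"
    using assms(4) False by (auto simp: lexf_def)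
  have "f x \<otimes>\<^bsub>A\<^esub> h x \<noteq> g x \<otimes>\<^bsub>A\<^esub> h x"
    using x assms by simp
  moreover have "\<forall>y<x. f y \<otimes>\<^bsub>A\<^esub> h y = g y \<otimes>\<^bsub>A\<^esub> h y"
    using x by simp
  moreover have "R (f x \<otimes>\<^bsub>A\<^esub> h x) (g x \<otimes>\<^bsub>A\<^esub> h x)"
    using x inv assms by simp
  ultimately show ?thesis unfolding lexf_def by blast
qed

lemma lexle_props:
  assumes p: "p \<in> BB A" and q: "q \<in> BB A" and r: "r \<in> BB A"
  shows "lexle R p p"
    and "lexle R p q \<and> lexle R q p \<longrightarrow> p = q"
    and "lexle R p q \<and> lexle R q r \<longrightarrow> lexle R p r"
    and "lexle R p q \<or> lexle R q p"
    and "lexle R p q \<longrightarrow> lexle R (p \<otimes>\<^bsub>wreath_Z A\<^esub> r) (q \<otimes>\<^bsub>wreath_Z A\<^esub> r)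
            \<and> lexle R (r \<otimes>\<^bsub>wreath_Z A\<^esub> p) (r \<otimes>\<^bsub>wreath_Z A\<^esub> q)"
proof -
  obtain f m N where pp: "p = (f,m)" and f: "\<forall>t. f t \<in> carrier A" and N: "\<forall>t<N. f t = \<one>\<^bsub>A\<^esub>"
    using p by (auto simp: BB_def)
  obtain g n M where qq: "q = (g,n)" and g: "\<forall>t. g t \<in> carrier A" and M: "\<forall>t<M. g t = \<one>\<^bsub>A\<^esub>"
    using q by (auto simp: BB_def)
  obtain h k where rr: "r = (h,k)" and h: "\<forall>t. h t \<in> carrier A"
    using r by (auto simp: BB_def)
  show "lexle R p p" by (simp add: lexle_def lexf_def)
  show "lexle R p q \<and> lexle R q p \<longrightarrow> p = q"
    using lexf_antisym[OF f g] by (auto simp: lexle_def pp qq)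
  show "lexle R p q \<and> lexle R q r \<longrightarrow> lexle R p r"
    using lexf_trans[OF f g h] by (auto simp: lexle_def pp qq rr)
  have "\<forall>x<min N M. f x = g x" using N M by simp
  then have "lexf R f g \<or> lexf R g f" by (rule lexf_total[OF f g])
  then show "lexle R p q \<or> lexle R q p"
    by (auto simp: lexle_def pp qq)
  show "lexle R p q \<longrightarrow> lexle R (p \<otimes>\<^bsub>wreath_Z A\<^esub> r) (q \<otimes>\<^bsub>wreath_Z A\<^esub> r)
            \<and> lexle R (r \<otimes>\<^bsub>wreath_Z A\<^esub> p) (r \<otimes>\<^bsub>wreath_Z A\<^esub> q)"
  proof
    assume le: "lexle R p q"
    show "lexle R (p \<otimes>\<^bsub>wreath_Z A\<^esub> r) (q \<otimes>\<^bsub>wreath_Z A\<^esub> r)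
            \<and> lexle R (r \<otimes>\<^bsub>wreath_Z A\<^esub> p) (r \<otimes>\<^bsub>wreath_Z A\<^esub> q)"
    proof (cases "m < n")
      case True then show ?thesis by (simp add: lexle_def pp qq rr)
    next
      case False
      then have mn: "m = n" and lf: "lexf R f g" using le by (auto simp: lexle_def pp qq)
      have h': "\<forall>t. h (t + m) \<in> carrier A" using h by simp
      have 1: "lexf R (\<lambda>x. f x \<otimes>\<^bsub>A\<^esub> h (x + m)) (\<lambda>x. g x \<otimes>\<^bsub>A\<^esub> h (x + m))"
        using lexf_right[OF f g h' lf] .
      have 2: "lexf R (\<lambda>x. h x \<otimes>\<^bsub>A\<^esub> f (x + k)) (\<lambda>x. h x \<otimes>\<^bsub>A\<^esub> g (x + k))"
        using lexf_left[OF f g h lf] .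
      show ?thesis using 1 2 mn by (simp add: lexle_def pp qq rr)
    qed
  qed
qed

end

lemma lo_wreath_sub:
  assumes lo: "linearly_orderable A" and S: "S \<subseteq> BB A"
  shows "linearly_orderable (gen_subgroup (wreath_Z A) S)"
proof -
  obtain R where grp: "group A"
    and refl: "\<forall>x\<in>carrier A. R x x"
    and antisym: "\<forall>x\<in>carrier A. \<forall>y\<in>carrier A. R x y \<and> R y x \<longrightarrow> x = y"
    and trans: "\<forall>x\<in>carrier A. \<forall>y\<in>carrier A. \<forall>w\<in>carrier A. R x y \<and> R y w \<longrightarrow> R x w"
    and total: "\<forall>x\<in>carrier A. \<forall>y\<in>carrier A. R x y \<or> R y x"
    and inv: "\<forall>g1\<in>carrier A. \<forall>g2\<in>carrier A. \<forall>x\<in>carrier A.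
            R g1 g2 \<longrightarrow> R (g1 \<otimes>\<^bsub>A\<^esub> x) (g2 \<otimes>\<^bsub>A\<^esub> x) \<and> R (x \<otimes>\<^bsub>A\<^esub> g1) (x \<otimes>\<^bsub>A\<^esub> g2)"
    using lo unfolding linearly_orderable_def by blast
  note P = lexle_props[OF grp refl antisym trans total inv]
  interpret W: group "wreath_Z A" using wreath_group[OF grp] .
  have sub: "subgroup (BB A) (wreath_Z A)" by (rule BB_subgroup[OF grp])
  have gs: "generate (wreath_Z A) S \<subseteq> BB A" by (rule W.generate_subgroup_incl[OF S sub])
  have Scar: "S \<subseteq> carrier (wreath_Z A)" using S subgroup.subset[OF sub] by blast
  have G: "group (gen_subgroup (wreath_Z A) S)" unfolding gen_subgroup_def
    by (rule subgroup.subgroup_is_group[OF W.generate_is_subgroup[OF Scar] W.is_group])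
  have car: "carrier (gen_subgroup (wreath_Z A) S) = generate (wreath_Z A) S"
    by (simp add: gen_subgroup_def)
  have mul: "\<And>x y. x \<otimes>\<^bsub>gen_subgroup (wreath_Z A) S\<^esub> y = x \<otimes>\<^bsub>wreath_Z A\<^esub> y"
    by (simp add: gen_subgroup_def)
  show ?thesis unfolding linearly_orderable_def car mul
  proof (intro conjI G exI[of _ "lexle R"] ballI)
    fix x y w assume x: "x \<in> generate (wreath_Z A) S" and y: "y \<in> generate (wreath_Z A) S"
      and w: "w \<in> generate (wreath_Z A) S"
    have xb: "x \<in> BB A" and yb: "y \<in> BB A" and wb: "w \<in> BB A" using x y w gs by auto
    show "lexle R x x" by (rule P(1)[OF xb xb xb])
    show "lexle R x y \<and> lexle R y x \<longrightarrow> x = y" by (rule P(2)[OF xb yb wb])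
    show "lexle R x y \<and> lexle R y w \<longrightarrow> lexle R x w" by (rule P(3)[OF xb yb wb])
    show "lexle R x y \<or> lexle R y x" by (rule P(4)[OF xb yb wb])
    show "lexle R x y \<longrightarrow> lexle R (x \<otimes>\<^bsub>wreath_Z A\<^esub> w) (y \<otimes>\<^bsub>wreath_Z A\<^esub> w)
            \<and> lexle R (w \<otimes>\<^bsub>wreath_Z A\<^esub> x) (w \<otimes>\<^bsub>wreath_Z A\<^esub> y)" by (rule P(5)[OF xb yb wb])
  qed
qed

lemma K_one: "\<one>\<^bsub>K_grp H a\<^esub> = \<one>\<^bsub>wreath_Z H\<^esub>"
  by (simp add: K_grp_def gen_subgroup_def)

lemma K_carrier: "carrier (K_grp H a) = generate (wreath_Z H) (insert (z_elt H) (b_elt H a ` {i. i \<ge> 1}))"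
  by (simp add: K_grp_def gen_subgroup_def)

theorem corollary4:
  fixes H :: "('a, 'm) monoid_scheme" and a :: "nat \<Rightarrow> 'a"
  assumes "group H"
    and "\<And>i. i \<ge> 1 \<Longrightarrow> a i \<in> carrier H"
    and "generate H (a ` {i. i \<ge> 1}) = carrier H"
    and "linearly_orderable H"
  shows "linearly_orderable (G_grp H a)"
proof -
  interpret H: group H by fact
  have "insert (z_elt H) (b_elt H a ` {i. i \<ge> 1}) \<subseteq> BB H"
  proof -
    have "z_elt H \<in> BB H" by (auto simp: z_elt_def BB_def)
    moreover have "b_elt H a i \<in> BB H" if "i \<ge> 1" for i
      using assms(2)[OF that] by (auto simp: b_elt_def BB_def intro!: exI[of _ 1])
    ultimately show ?thesis by auto
  qed
  then have LK: "linearly_orderable (K_grp H a)"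
    unfolding K_grp_def by (rule lo_wreath_sub[OF assms(4)])
  let ?S = "insert (z_elt H) (b_elt H a ` {i. i \<ge> 1})"
  have zK: "z_elt H \<in> carrier (K_grp H a)" unfolding K_carrier by (rule generate.incl) simp
  have bK: "b_elt H a i \<in> carrier (K_grp H a)" if "i \<ge> 1" for i
    unfolding K_carrier by (rule generate.incl) (use that in simp)
  have oK: "\<one>\<^bsub>K_grp H a\<^esub> \<in> carrier (K_grp H a)" unfolding K_carrier K_one by (rule generate.one)
  have cB: "c_elt H a \<in> BB (K_grp H a)"
  proof -
    have vals: "(if k = 1 then z_elt H
                     else if (\<exists>i::nat. i \<ge> 1 \<and> k = 2 ^ i) then b_elt H a (SOME i. i \<ge> 1 \<and> k = 2 ^ i)
                     else \<one>\<^bsub>K_grp H a\<^esub>) \<in> carrier (K_grp H a)" for k :: int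
    proof (cases "k = 1")
      case True then show ?thesis using zK by simp
    next
      case False
      show ?thesis
      proof (cases "\<exists>i::nat. i \<ge> 1 \<and> k = 2 ^ i")
        case True
        then have "(SOME i. i \<ge> 1 \<and> k = 2 ^ i) \<ge> 1" by (rule someI2_ex) simp
        then show ?thesis using bK False True by simp
      next
        case F2: False
        show ?thesis by (subst if_not_P[OF False], subst if_not_P[OF F2]) (rule oK)
      qed
    qed
    have low: "\<forall>x<(1::int). \<not> (\<exists>i::nat. i \<ge> 1 \<and> x = 2 ^ i)"
    proof (intro allI impI notI)
      fix x :: int assume "x < 1" "\<exists>i::nat. i \<ge> 1 \<and> x = 2 ^ i"
      then obtain i :: nat where "x = 2 ^ i" by blast
      then have "x > 0" by simp
      with \<open>x < 1\<close> show False by simp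
    qed
    show ?thesis unfolding c_elt_def BB_def
      using vals low by (auto intro!: exI[of _ 1])
  qed
  have sB: "s_elt H a \<in> BB (K_grp H a)" using oK by (auto simp: s_elt_def BB_def)
  have "{c_elt H a, s_elt H a} \<subseteq> BB (K_grp H a)" using cB sB by simp
  then show ?thesis unfolding G_grp_def by (rule lo_wreath_sub[OF LK])
qed

end
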